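(* Let $\mathcal{R}$ be a fusion ring with basis $\{x_1=1,\ldots,x_m\}$ and fusion matrices $M_j$. Then the primary $1$-matrix is positive semidefinite: \[ \sum_{j=1}^m\|M_j\|\,M_j\geq 0. \]
   Context: A fusion ring is a ring $\mathcal{R}$ which is a free $\mathbb{Z}$-module with a finite basis $\{x_1=1,\ldots,x_m\}$ such that $x_ix_j=\sum_k N_{ij}^k x_k$ with $N_{ij}^k\in\mathbb{N}$; there is an involution $i\mapsto i^*$ whose $\mathbb{Z}$-linear extension is an anti-involution of $\mathcal{R}$; and the coefficient of $x_1$ in $x_ix_j$ equals $\delta_{i,j^*}$. The fusion matrix of $x_j$ is $(M_j)_{k,i}=N_{ji}^k$ and $\|M_j\|$ is its operator norm on $\mathbb{C}^m$. *)

theory Defs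
  imports "HOL-Analysis.Analysis"
begin

text \<open>The basis element
  x_i is indexed by i; the unit x_1 is the index e; the involution is dual;
  N i j k is the structure constant N_{ij}^k, i.e. x_i x_j = sum_k N i j k x_k.
  Multiplication on the free Z-module is the bilinear extension, so ring axioms
  reduce to associativity and unitality on basis elements.\<close>

definition fusion_ring :: "('n::finite \<Rightarrow> 'n \<Rightarrow> 'n \<Rightarrow> nat) \<Rightarrow> 'n \<Rightarrow> ('n \<Rightarrow> 'n) \<Rightarrow> bool" where
  "fusion_ring N e dual \<longleftrightarrow>
     \<comment> \<open>associativity: (x_i x_j) x_l = x_i (x_j x_l)\<close>
     (\<forall>i j l t. (\<Sum>k\<in>UNIV. N i j k * N k l t) = (\<Sum>k\<in>UNIV. N j l k * N i k t)) \<and>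
     \<comment> \<open>x_e is the identity\<close>
     (\<forall>i k. N e i k = (if k = i then 1 else 0) \<and> N i e k = (if k = i then 1 else 0)) \<and>
     \<comment> \<open>the map i -> i* is an involution\<close>
     (\<forall>i. dual (dual i) = i) \<and>
     \<comment> \<open>its linear extension is a (unital) anti-automorphism: (x_i x_j)* = x_j* x_i*\<close>
     dual e = e \<and>
     (\<forall>i j k. N i j (dual k) = N (dual j) (dual i) k) \<and>
     \<comment> \<open>coefficient of x_1 in x_i x_j is delta_{i, j*}\<close>
     (\<forall>i j. N i j e = (if i = dual j then 1 else 0))"

definition fusion_mat :: "('n::finite \<Rightarrow> 'n \<Rightarrow> 'n \<Rightarrow> nat) \<Rightarrow> 'n \<Rightarrow> complex^'n^'n" where
  "fusion_mat N j = (\<chi> k i. of_nat (N j i k))"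

definition mat_opnorm :: "complex^'n^'n \<Rightarrow> real" where
  "mat_opnorm A = onorm (\<lambda>v::complex^'n. A *v v)"

definition psd :: "complex^'n^'n \<Rightarrow> bool" where
  "psd A \<longleftrightarrow> (\<forall>v::complex^'n.
      let q = (\<Sum>i\<in>UNIV. cnj (v $ i) * (A *v v) $ i) in Im q = 0 \<and> 0 \<le> Re q)"

end

theory Submission
  imports Defs
begin

lemma pf_exists:
  fixes R :: "'n::finite \<Rightarrow> 'n \<Rightarrow> real"
  assumes Rpos: "\<And>k i. R k i > 0"
  shows "\<exists>d r. (\<forall>k. d k > 0) \<and> (\<forall>k. (\<Sum>i\<in>UNIV. R k i * d i) = r * d k)"
proof -
  define S where "S = {x::real^'n. (\<forall>i. 0 \<le> x$i) \<and> (\<Sum>i\<in>UNIV. x$i) = 1}"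
  define num where "num k x = (\<Sum>i\<in>UNIV. R k i * x$i)" for k and x :: "real^'n"
  define den where "den x = (\<Sum>k\<in>UNIV. num k x)" for x
  define f where "f x = (\<chi> k. num k x / den x)" for x
  have numpos: "num k x > 0" if "x \<in> S" for k x
  proof -
    from that have nn: "\<forall>i. 0 \<le> x$i" and s1: "(\<Sum>i\<in>UNIV. x$i) = 1" by (auto simp: S_def)
    then obtain i0 where "x$i0 \<noteq> 0" by (metis (no_types, lifting) sum.neutral zero_neq_one)
    with nn have xi0: "x$i0 > 0" by (simp add: order_less_le)
    have "0 < R k i0 * x$i0" using Rpos xi0 by simp
    also have "\<dots> \<le> num k x" unfolding num_def
      by (rule member_le_sum) (use nn Rpos[THEN less_imp_le] in \<open>auto intro: mult_nonneg_nonneg\<close>)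
    finally show ?thesis .
  qed
  have denpos: "den x > 0" if "x \<in> S" for x
    unfolding den_def using numpos[OF that]
    by (simp add: sum_pos)
  have "compact S"
  unfolding compact_eq_bounded_closed proof
    show "bounded S" unfolding bounded_iff
    proof (intro exI ballI)
      fix x assume "x \<in> S"
      then have "norm x \<le> (\<Sum>i\<in>UNIV. \<bar>x$i\<bar>)" by (rule_tac norm_le_l1_cart)
      also have "\<dots> = 1" using \<open>x \<in> S\<close> by (simp add: S_def)
      finally show "norm x \<le> 1" .
    qed
    have "S = {x. \<forall>i. 0 \<le> x$i} \<inter> {x. (\<Sum>i\<in>UNIV. x$i) = 1}" by (auto simp: S_def)
    moreover have "closed {x::real^'n. (\<Sum>i\<in>UNIV. x$i) = 1}"
      by (intro closed_Collect_eq continuous_intros)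
    ultimately show "closed S" by (metis closed_Int closed_positive_orthant)
  qed
  moreover have "convex S"
    unfolding convex_def S_def
    by (auto simp: sum.distrib sum_distrib_left[symmetric] intro!: add_nonneg_nonneg mult_nonneg_nonneg)
  moreover have "S \<noteq> {}"
  proof -
    obtain i0 :: 'n where True by simp
    have "(\<chi> i. if i = i0 then 1 else 0) \<in> S" by (simp add: S_def)
    then show ?thesis by blast
  qed
  moreover have "continuous_on S f"
    unfolding f_def den_def num_def
    by (intro continuous_intros) (use denpos in \<open>fastforce simp: den_def num_def\<close>)
  moreover have "f \<in> S \<rightarrow> S"
  proof
    fix x assume xS: "x \<in> S"
    have "(\<Sum>k\<in>UNIV. num k x / den x) = 1"
      using denpos[OF xS] by (simp add: sum_divide_distrib[symmetric] den_def)
    then show "f x \<in> S" using numpos[OF xS] denpos[OF xS]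
      by (auto simp: S_def f_def less_imp_le)
  qed
  ultimately obtain x where xS: "x \<in> S" and fx: "f x = x" by (rule brouwer)
  show ?thesis
  proof (intro exI conjI allI)
    fix k
    have "x$k = num k x / den x" using fx by (metis f_def vec_lambda_beta)
    then show "0 < x$k" using numpos[OF xS] denpos[OF xS] by simp
    show "(\<Sum>i\<in>UNIV. R k i * x$i) = den x * x$k"
      using \<open>x$k = num k x / den x\<close> denpos[OF xS] by (simp add: num_def)
  qed
qed

lemma wcs:
  fixes w x :: "'a \<Rightarrow> real"
  assumes "\<And>i. i \<in> I \<Longrightarrow> w i \<ge> 0"
  shows "(\<Sum>i\<in>I. w i * x i)\<^sup>2 \<le> (\<Sum>i\<in>I. w i) * (\<Sum>i\<in>I. w i * (x i)\<^sup>2)"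
proof -
  have "(\<Sum>i\<in>I. sqrt (w i) * (sqrt (w i) * x i))\<^sup>2 \<le> (\<Sum>i\<in>I. (sqrt (w i))\<^sup>2) * (\<Sum>i\<in>I. (sqrt (w i) * x i)\<^sup>2)"
    by (rule Cauchy_Schwarz_ineq_sum)
  moreover have "(\<Sum>i\<in>I. sqrt (w i) * (sqrt (w i) * x i)) = (\<Sum>i\<in>I. w i * x i)"
    by (rule sum.cong) (use assms in \<open>auto simp: mult.assoc[symmetric]\<close>)
  moreover have "(\<Sum>i\<in>I. (sqrt (w i))\<^sup>2) = (\<Sum>i\<in>I. w i)"
    by (rule sum.cong) (use assms in auto)
  moreover have "(\<Sum>i\<in>I. (sqrt (w i) * x i)\<^sup>2) = (\<Sum>i\<in>I. w i * (x i)\<^sup>2)"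
    by (rule sum.cong) (use assms in \<open>auto simp: power_mult_distrib\<close>)
  ultimately show ?thesis by simp
qed

lemma norm_vec_sq: "(norm (v::complex^'n))\<^sup>2 = (\<Sum>i\<in>UNIV. (cmod (v$i))\<^sup>2)"
  by (simp add: norm_vec_def L2_set_def sum_nonneg)

lemma schur:
  fixes L :: "'n::finite \<Rightarrow> 'n \<Rightarrow> real" and M :: "complex^'n^'n"
  assumes M: "\<And>k i. M $ k $ i = complex_of_real (L k i)"
    and Lnn: "\<And>k i. L k i \<ge> 0" and ppos: "\<And>i. p i > 0"
    and row: "\<And>k. (\<Sum>i\<in>UNIV. L k i * p i) = c * p k"
    and col: "\<And>i. (\<Sum>k\<in>UNIV. L k i * p k) = c * p i"
  shows "mat_opnorm M = c"
proof -
  obtain k0 :: 'n where True by simp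
  have c0: "c \<ge> 0"
  proof -
    have "0 \<le> (\<Sum>i\<in>UNIV. L k0 i * p i)" by (intro sum_nonneg) (simp add: Lnn ppos less_imp_le)
    then have "0 \<le> c * p k0" using row by simp
    then show ?thesis using ppos[of k0] by (simp add: zero_le_mult_iff)
  qed
  have up: "norm (M *v v) \<le> c * norm v" for v
  proof -
    have comp: "cmod ((M *v v)$k) \<le> (\<Sum>i\<in>UNIV. L k i * cmod (v$i))" for k
    proof -
      have "cmod ((M *v v)$k) = cmod (\<Sum>i\<in>UNIV. complex_of_real (L k i) * v$i)"
        by (simp add: matrix_vector_mult_def M)
      also have "\<dots> \<le> (\<Sum>i\<in>UNIV. cmod (complex_of_real (L k i) * v$i))" by (rule norm_sum)
      also have "\<dots> = (\<Sum>i\<in>UNIV. L k i * cmod (v$i))"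
        by (simp add: norm_mult Lnn)
      finally show ?thesis .
    qed
    have sq: "(cmod ((M *v v)$k))\<^sup>2 \<le> c * p k * (\<Sum>i\<in>UNIV. L k i * (cmod (v$i))\<^sup>2 / p i)" for k
    proof -
      have "(cmod ((M *v v)$k))\<^sup>2 \<le> (\<Sum>i\<in>UNIV. L k i * cmod (v$i))\<^sup>2"
        using comp[of k] by (simp add: power_mono)
      also have "(\<Sum>i\<in>UNIV. L k i * cmod (v$i)) = (\<Sum>i\<in>UNIV. (L k i * p i) * (cmod (v$i) / p i))"
        by (rule sum.cong) (use ppos in \<open>auto simp: field_simps less_imp_neq[symmetric]\<close>)
      also have "(\<dots>)\<^sup>2 \<le> (\<Sum>i\<in>UNIV. L k i * p i) * (\<Sum>i\<in>UNIV. (L k i * p i) * (cmod (v$i) / p i)\<^sup>2)"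
        by (rule wcs) (simp add: Lnn ppos less_imp_le)
      also have "(\<Sum>i\<in>UNIV. (L k i * p i) * (cmod (v$i) / p i)\<^sup>2) = (\<Sum>i\<in>UNIV. L k i * (cmod (v$i))\<^sup>2 / p i)"
        by (rule sum.cong) (use ppos in \<open>auto simp: field_simps power2_eq_square less_imp_neq[symmetric]\<close>)
      finally show ?thesis using row[of k] by simp
    qed
    have "(norm (M *v v))\<^sup>2 = (\<Sum>k\<in>UNIV. (cmod ((M *v v)$k))\<^sup>2)" by (rule norm_vec_sq)
    also have "\<dots> \<le> (\<Sum>k\<in>UNIV. c * p k * (\<Sum>i\<in>UNIV. L k i * (cmod (v$i))\<^sup>2 / p i))"
      by (rule sum_mono) (rule sq)
    also have "\<dots> = c * (\<Sum>k\<in>UNIV. \<Sum>i\<in>UNIV. L k i * p k * ((cmod (v$i))\<^sup>2 / p i))"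
      unfolding sum_distrib_left by (intro sum.cong refl) (simp add: mult_ac)
    also have "\<dots> = c * (\<Sum>i\<in>UNIV. \<Sum>k\<in>UNIV. L k i * p k * ((cmod (v$i))\<^sup>2 / p i))"
      by (subst sum.swap) (rule refl)
    also have "\<dots> = c * (\<Sum>i\<in>UNIV. (cmod (v$i))\<^sup>2 / p i * (\<Sum>k\<in>UNIV. L k i * p k))"
      unfolding sum_distrib_left sum_distrib_right by (intro arg_cong[where f="\<lambda>x. c * x"] sum.cong refl) (simp add: mult_ac)
    also have "\<dots> = c * (\<Sum>i\<in>UNIV. c * (cmod (v$i))\<^sup>2)"
      by (intro arg_cong[where f="\<lambda>x. c * x"] sum.cong refl) (use ppos in \<open>simp add: col less_imp_neq[symmetric]\<close>)
    also have "\<dots> = (c * norm v)\<^sup>2"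
      unfolding power_mult_distrib norm_vec_sq sum_distrib_left by (simp add: power2_eq_square mult.assoc)
    finally have "(norm (M *v v))\<^sup>2 \<le> (c * norm v)\<^sup>2" .
    then show ?thesis by (rule power2_le_imp_le) (use c0 in simp)
  qed
  have le: "mat_opnorm M \<le> c" unfolding mat_opnorm_def by (rule onorm_le) (rule up)
  define q :: "complex^'n" where "q = (\<chi> i. complex_of_real (p i))"
  have Mq: "M *v q = complex_of_real c *s q"
    by (simp add: vec_eq_iff matrix_vector_mult_def M q_def row[symmetric] flip: of_real_mult of_real_sum)
  have nq: "norm q > 0"
  proof -
    have "q $ k0 \<noteq> 0" using ppos[of k0] by (simp add: q_def)
    then have "q \<noteq> 0" by auto
    then show ?thesis by simp
  qed
  have "norm (M *v q) \<le> mat_opnorm M * norm q"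
    unfolding mat_opnorm_def by (rule onorm) simp
  moreover have "norm (M *v q) = c * norm q"
    using c0 by (simp add: Mq norm_vec_def L2_set_def norm_mult vector_scalar_mult_def
                   power_mult_distrib sum_distrib_left[symmetric] real_sqrt_mult)
  ultimately have "c \<le> mat_opnorm M" using nq by simp
  with le show ?thesis by simp
qed

lemma pf_simple:
  fixes R :: "'n::finite \<Rightarrow> 'n \<Rightarrow> real"
  assumes Rpos: "\<And>k i. R k i > 0" and dpos: "\<And>k. d k > 0"
    and wnn: "\<And>k. w k \<ge> 0"
    and Rw: "\<And>k. (\<Sum>i\<in>UNIV. R k i * w i) = r * w k"
    and Rd: "\<And>k. (\<Sum>i\<in>UNIV. R k i * d i) = r * d k"
  shows "\<exists>c\<ge>0. \<forall>k. w k = c * d k"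
proof -
  define t where "t = Min (range (\<lambda>k. w k / d k))"
  have "t \<in> range (\<lambda>k. w k / d k)" unfolding t_def by (rule Min_in) auto
  then obtain k0 where k0: "t = w k0 / d k0" by auto
  have tle: "t \<le> w k / d k" for k unfolding t_def by (rule Min_le) auto
  have t0: "t \<ge> 0" using k0 wnn dpos by (simp add: less_imp_le)
  define u where "u k = w k - t * d k" for k
  have unn: "u k \<ge> 0" for k
    using tle[of k] dpos[of k] by (simp add: u_def pos_le_divide_eq)
  have uk0: "u k0 = 0" using k0 dpos[of k0] by (simp add: u_def)
  have "(\<Sum>i\<in>UNIV. R k0 i * u i) = r * u k0"
    using Rw[of k0] Rd[of k0]
    by (simp add: u_def right_diff_distrib sum_subtractf sum_distrib_left[symmetric] mult.left_commute[of _ t])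
  then have "(\<Sum>i\<in>UNIV. R k0 i * u i) = 0" using uk0 by simp
  then have "\<forall>i\<in>UNIV. R k0 i * u i = 0"
    by (subst sum_nonneg_eq_0_iff[symmetric]) (auto intro: mult_nonneg_nonneg less_imp_le Rpos unn)
  then have "u i = 0" for i using Rpos[of k0 i] by (metis UNIV_I less_irrefl mult_eq_0_iff)
  then show ?thesis using t0 by (intro exI[of _ t]) (auto simp: u_def)
qed

lemma sum_delta_mult: fixes f :: "'b::finite \<Rightarrow> 'a::comm_semiring_1" shows "(\<Sum>k\<in>UNIV. f k * (if k = x then 1 else 0)) = (f x :: 'a::comm_semiring_1)"
proof -
  have "(\<lambda>k. f k * (if k = x then 1 else 0)) = (\<lambda>k. if k = x then f k else 0)" by auto
  then show ?thesis by (simp only:) (subst sum.delta, simp, simp only: UNIV_I if_True)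
qed

locale fr =
  fixes N :: "'n::finite \<Rightarrow> 'n \<Rightarrow> 'n \<Rightarrow> nat" and e :: 'n and dual :: "'n \<Rightarrow> 'n"
  assumes FR: "fusion_ring N e dual"
begin

lemma assoc: "(\<Sum>k\<in>UNIV. N i j k * N k l t) = (\<Sum>k\<in>UNIV. N j l k * N i k t)"
  using FR unfolding fusion_ring_def by blast
lemma unitL: "N e i k = (if k = i then 1 else 0)"
  using FR unfolding fusion_ring_def by blast
lemma unitR: "N i e k = (if k = i then 1 else 0)"
  using FR unfolding fusion_ring_def by blast
lemma invol[simp]: "dual (dual i) = i"
  using FR unfolding fusion_ring_def by blast
lemma dual_e[simp]: "dual e = e"
  using FR unfolding fusion_ring_def by blast
lemma anti: "N i j (dual k) = N (dual j) (dual i) k"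
  using FR unfolding fusion_ring_def by blast
lemma coefe: "N i j e = (if i = dual j then 1 else 0)"
  using FR unfolding fusion_ring_def by blast
lemma dual_eq: "(i = dual k) = (k = dual i)" by (metis invol)

lemma cyc: "N i j (dual l) = N j l (dual i)"
proof -
  have "(\<Sum>k\<in>UNIV. N i j k * N k l e) = (\<Sum>k\<in>UNIV. N j l k * N i k e)" by (rule assoc)
  then show ?thesis by (simp only: coefe dual_eq sum_delta_mult)
qed

lemma recip: "N i l k = N (dual i) k l"
proof -
  have "N i l k = N i l (dual (dual k))" by simp
  also have "\<dots> = N l (dual k) (dual i)" by (rule cyc)
  also have "\<dots> = N k (dual l) i" by (simp add: anti)
  also have "\<dots> = N k (dual l) (dual (dual i))" by simp
  also have "\<dots> = N (dual i) k (dual (dual l))" by (rule cyc[symmetric])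
  finally show ?thesis by simp
qed

lemma nonzero: "\<exists>k. N a b k > 0"
proof -
  have "(\<Sum>k\<in>UNIV. N a b k * N k (dual b) a) = (\<Sum>k\<in>UNIV. N b (dual b) k * N a k a)" by (rule assoc)
  also have "\<dots> \<ge> N b (dual b) e * N a e a" by (rule member_le_sum) auto
  also have "N b (dual b) e * N a e a = 1" by (simp add: coefe unitR)
  finally have "1 \<le> (\<Sum>k\<in>UNIV. N a b k * N k (dual b) a)" .
  then have "(\<Sum>k\<in>UNIV. N a b k * N k (dual b) a) \<noteq> 0" by linarith
  then obtain k where "N a b k * N k (dual b) a \<noteq> 0" by (meson sum.neutral)
  then show ?thesis by auto
qed

definition Rm :: "'n \<Rightarrow> 'n \<Rightarrow> real" where "Rm k i = real (\<Sum>s\<in>UNIV. N i s k)"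

lemma Rm_pos: "Rm k i > 0"
proof -
  obtain j where "N (dual i) k j > 0" using nonzero by blast
  then have "N i j k > 0" using recip[of i j k] by simp
  also have "N i j k \<le> (\<Sum>s\<in>UNIV. N i s k)" by (rule member_le_sum) auto
  finally show ?thesis unfolding Rm_def of_nat_0_less_iff .
qed

lemma commute_nat: "(\<Sum>i\<in>UNIV. (\<Sum>s\<in>UNIV. N i s k) * N j l i) = (\<Sum>m\<in>UNIV. N j m k * (\<Sum>s\<in>UNIV. N l s m))"
proof -
  have "(\<Sum>i\<in>UNIV. (\<Sum>s\<in>UNIV. N i s k) * N j l i) = (\<Sum>i\<in>UNIV. \<Sum>s\<in>UNIV. N j l i * N i s k)"
    by (intro sum.cong refl) (simp add: sum_distrib_left mult.commute)
  also have "\<dots> = (\<Sum>s\<in>UNIV. \<Sum>i\<in>UNIV. N j l i * N i s k)" by (rule sum.swap)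
  also have "\<dots> = (\<Sum>s\<in>UNIV. \<Sum>m\<in>UNIV. N l s m * N j m k)" by (simp add: assoc)
  also have "\<dots> = (\<Sum>m\<in>UNIV. \<Sum>s\<in>UNIV. N l s m * N j m k)" by (rule sum.swap)
  also have "\<dots> = (\<Sum>m\<in>UNIV. N j m k * (\<Sum>s\<in>UNIV. N l s m))"
    by (intro sum.cong refl) (simp add: sum_distrib_left mult.commute)
  finally show ?thesis .
qed


lemma commute_real: "(\<Sum>i\<in>UNIV. Rm k i * real (N j l i)) = (\<Sum>m\<in>UNIV. real (N j m k) * Rm m l)"
proof -
  have "real (\<Sum>i\<in>UNIV. (\<Sum>s\<in>UNIV. N i s k) * N j l i) = real (\<Sum>m\<in>UNIV. N j m k * (\<Sum>s\<in>UNIV. N l s m))"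
    by (simp only: commute_nat)
  then show ?thesis by (simp add: Rm_def)
qed

definition dd :: "'n \<Rightarrow> real" where
  "dd = (SOME d. (\<forall>k. d k > 0) \<and> (\<exists>r. \<forall>k. (\<Sum>i\<in>UNIV. Rm k i * d i) = r * d k))"

lemma dd_prop: "(\<forall>k. dd k > 0) \<and> (\<exists>r. \<forall>k. (\<Sum>i\<in>UNIV. Rm k i * dd i) = r * dd k)"
proof -
  have "\<exists>d r. (\<forall>k. d k > 0) \<and> (\<forall>k. (\<Sum>i\<in>UNIV. Rm k i * d i) = r * d k)"
    by (rule pf_exists) (rule Rm_pos)
  then have "\<exists>d. (\<forall>k. d k > 0) \<and> (\<exists>r. \<forall>k. (\<Sum>i\<in>UNIV. Rm k i * d i) = r * d k)" by blast
  then show ?thesis unfolding dd_def by (rule someI_ex)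
qed

lemma dd_pos: "dd k > 0" using dd_prop by blast

definition c :: "'n \<Rightarrow> real" where
  "c j = (SOME t. t \<ge> 0 \<and> (\<forall>k. (\<Sum>l\<in>UNIV. real (N j l k) * dd l) = t * dd k))"

lemma c_prop: "c j \<ge> 0 \<and> (\<forall>k. (\<Sum>l\<in>UNIV. real (N j l k) * dd l) = c j * dd k)"
proof -
  obtain r where r: "\<And>k. (\<Sum>i\<in>UNIV. Rm k i * dd i) = r * dd k" using dd_prop by blast
  define w where "w k = (\<Sum>l\<in>UNIV. real (N j l k) * dd l)" for k
  have wnn: "w k \<ge> 0" for k unfolding w_def using dd_pos by (intro sum_nonneg) (simp add: less_imp_le)
  have Rw: "(\<Sum>i\<in>UNIV. Rm k i * w i) = r * w k" for k
  proof -
    have "(\<Sum>i\<in>UNIV. Rm k i * w i) = (\<Sum>l\<in>UNIV. dd l * (\<Sum>i\<in>UNIV. Rm k i * real (N j l i)))"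
      unfolding w_def sum_distrib_left by (subst sum.swap) (simp add: mult_ac)
    also have "\<dots> = (\<Sum>l\<in>UNIV. dd l * (\<Sum>m\<in>UNIV. real (N j m k) * Rm m l))"
      by (simp only: commute_real)
    also have "\<dots> = (\<Sum>m\<in>UNIV. real (N j m k) * (\<Sum>l\<in>UNIV. Rm m l * dd l))"
      unfolding sum_distrib_left by (subst sum.swap) (simp add: mult_ac)
    also have "\<dots> = r * w k"
      unfolding w_def r sum_distrib_left by (simp add: mult_ac)
    finally show ?thesis .
  qed
  have "\<exists>t\<ge>0. \<forall>k. w k = t * dd k"
    by (rule pf_simple[where R=Rm and r=r]) (use Rm_pos dd_pos wnn Rw r in auto)
  then have "\<exists>t. t \<ge> 0 \<and> (\<forall>k. (\<Sum>l\<in>UNIV. real (N j l k) * dd l) = t * dd k)"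
    unfolding w_def by blast
  then show ?thesis unfolding c_def by (rule someI_ex)
qed

lemma c_nn: "c j \<ge> 0" using c_prop by blast
lemma c_eig: "(\<Sum>l\<in>UNIV. real (N j l k) * dd l) = c j * dd k" using c_prop by blast

lemma c_e: "c e = 1"
proof -
  obtain k :: 'n where True by simp
  have "(\<Sum>l\<in>UNIV. real (N e l k) * dd l) = (\<Sum>l\<in>UNIV. if l = k then dd k else 0)"
    by (intro sum.cong refl) (simp add: unitL)
  also have "\<dots> = dd k" by simp
  finally have "(\<Sum>l\<in>UNIV. real (N e l k) * dd l) = dd k" .
  then have "c e * dd k = dd k" using c_eig[of e k] by simp
  then show ?thesis using dd_pos[of k] by simp
qed

lemma c_dual: "c (dual j) = c j"
proof -
  have "(\<Sum>k\<in>UNIV. dd k * (\<Sum>l\<in>UNIV. real (N j l k) * dd l)) = (\<Sum>l\<in>UNIV. dd l * (\<Sum>k\<in>UNIV. real (N (dual j) k l) * dd k))"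
    unfolding sum_distrib_left
    by (subst sum.swap) (intro sum.cong refl, simp add: recip[of j] mult_ac)
  moreover have "(\<Sum>k\<in>UNIV. dd k * (\<Sum>l\<in>UNIV. real (N j l k) * dd l)) = c j * (\<Sum>k\<in>UNIV. dd k * dd k)"
    by (simp only: c_eig) (simp add: sum_distrib_left mult_ac)
  moreover have "(\<Sum>l\<in>UNIV. dd l * (\<Sum>k\<in>UNIV. real (N (dual j) k l) * dd k)) = c (dual j) * (\<Sum>k\<in>UNIV. dd k * dd k)"
    by (simp only: c_eig) (simp add: sum_distrib_left mult_ac)
  ultimately have "c j * (\<Sum>k\<in>UNIV. dd k * dd k) = c (dual j) * (\<Sum>k\<in>UNIV. dd k * dd k)"
    by simp
  moreover have "(\<Sum>k\<in>UNIV. dd k * dd k) > 0"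
    using dd_pos by (intro sum_pos) auto
  ultimately show ?thesis by simp
qed

lemma c_char: "(\<Sum>k\<in>UNIV. real (N i l k) * c k) = c i * c l"
proof -
  obtain t :: 'n where True by simp
  have "(\<Sum>m\<in>UNIV. real (N i m t) * (\<Sum>s\<in>UNIV. real (N l s m) * dd s))
      = (\<Sum>s\<in>UNIV. dd s * (\<Sum>m\<in>UNIV. real (N l s m * N i m t)))"
    unfolding sum_distrib_left by (subst sum.swap) (simp add: mult_ac)
  also have "\<dots> = (\<Sum>s\<in>UNIV. dd s * (\<Sum>k\<in>UNIV. real (N i l k * N k s t)))"
    unfolding of_nat_sum[symmetric] by (simp only: assoc)
  also have "\<dots> = (\<Sum>k\<in>UNIV. real (N i l k) * (\<Sum>s\<in>UNIV. real (N k s t) * dd s))"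
    unfolding sum_distrib_left by (subst sum.swap) (simp add: mult_ac)
  finally have E: "(\<Sum>m\<in>UNIV. real (N i m t) * (\<Sum>s\<in>UNIV. real (N l s m) * dd s)) = (\<Sum>k\<in>UNIV. real (N i l k) * (\<Sum>s\<in>UNIV. real (N k s t) * dd s))" .
  have E1: "(\<Sum>m\<in>UNIV. real (N i m t) * (\<Sum>s\<in>UNIV. real (N l s m) * dd s)) = c l * (c i * dd t)"
  proof -
    have "(\<Sum>m\<in>UNIV. real (N i m t) * (\<Sum>s\<in>UNIV. real (N l s m) * dd s)) = (\<Sum>m\<in>UNIV. c l * (real (N i m t) * dd m))"
      by (simp only: c_eig) (simp add: mult_ac)
    also have "\<dots> = c l * (c i * dd t)" by (simp only: sum_distrib_left[symmetric] c_eig)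
    finally show ?thesis .
  qed
  have E2: "(\<Sum>k\<in>UNIV. real (N i l k) * (\<Sum>s\<in>UNIV. real (N k s t) * dd s)) = (\<Sum>k\<in>UNIV. real (N i l k) * c k) * dd t"
  proof -
    have "(\<Sum>k\<in>UNIV. real (N i l k) * (\<Sum>s\<in>UNIV. real (N k s t) * dd s)) = (\<Sum>k\<in>UNIV. real (N i l k) * (c k * dd t))"
      by (simp only: c_eig)
    also have "\<dots> = (\<Sum>k\<in>UNIV. real (N i l k) * c k) * dd t" unfolding sum_distrib_right by (simp add: mult_ac)
    finally show ?thesis .
  qed
  have "c l * (c i * dd t) = (\<Sum>k\<in>UNIV. real (N i l k) * c k) * dd t"
    using E E1 E2 by simp
  then show ?thesis using dd_pos[of t] by (simp add: mult_ac)
qed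

lemma c_eig2: "(\<Sum>l\<in>UNIV. real (N j l k) * c l) = c j * c k"
proof -
  have "(\<Sum>l\<in>UNIV. real (N j l k) * c l) = (\<Sum>l\<in>UNIV. real (N (dual j) k l) * c l)"
    by (intro sum.cong refl) (simp add: recip[of j])
  also have "\<dots> = c j * c k" by (simp add: c_char c_dual)
  finally show ?thesis .
qed

lemma c_norm: "mat_opnorm (fusion_mat N j) = c j"
proof (rule schur[where L="\<lambda>k i. real (N j i k)" and p=dd])
  show "fusion_mat N j $ k $ i = complex_of_real (real (N j i k))" for k i
    by (simp add: fusion_mat_def)
  show "0 \<le> real (N j i k)" for k i by simp
  show "0 < dd i" for i by (rule dd_pos)
  show "(\<Sum>i\<in>UNIV. real (N j i k) * dd i) = c j * dd k" for k by (rule c_eig)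
  show "(\<Sum>k\<in>UNIV. real (N j i k) * dd k) = c j * dd i" for i
  proof -
    have "(\<Sum>k\<in>UNIV. real (N j i k) * dd k) = (\<Sum>k\<in>UNIV. real (N (dual j) k i) * dd k)"
      by (intro sum.cong refl) (simp add: recip[of j])
    also have "\<dots> = c j * dd i" by (simp add: c_eig c_dual)
    finally show ?thesis .
  qed
qed


definition a :: "'n \<Rightarrow> 'n \<Rightarrow> real" where "a k i = (\<Sum>j\<in>UNIV. c j * real (N j i k))"

lemma A_entry: "(\<Sum>j\<in>UNIV. mat_opnorm (fusion_mat N j) *\<^sub>R fusion_mat N j) $ k $ i = complex_of_real (a k i)"
  unfolding sum_component vector_scaleR_component c_norm
  by (simp add: a_def fusion_mat_def scaleR_conv_of_real)

lemma inj_dual: "inj dual" by (metis injI invol)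
lemma range_dual: "range dual = UNIV" by (metis surjI invol)

lemma a_sym: "a k i = a i k"
proof -
  have "a k i = (\<Sum>j\<in>UNIV. c (dual j) * real (N (dual j) k i))"
    unfolding a_def by (intro sum.cong refl) (simp add: recip[of _ i k] c_dual)
  also have "\<dots> = (\<Sum>j\<in>range dual. c j * real (N j k i))"
    by (subst sum.reindex[OF inj_dual]) (simp add: o_def)
  also have "\<dots> = a i k" by (simp add: range_dual a_def)
  finally show ?thesis .
qed

lemma a_sq: "(\<Sum>m\<in>UNIV. a k m * a m i) = (\<Sum>j\<in>UNIV. c j * c j) * a k i"
proof -
  have "(\<Sum>m\<in>UNIV. a k m * a m i) = (\<Sum>m\<in>UNIV. \<Sum>j\<in>UNIV. \<Sum>l\<in>UNIV. (c j * real (N j m k)) * (c l * real (N l i m)))"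
    unfolding a_def sum_product ..
  also have "\<dots> = (\<Sum>j\<in>UNIV. \<Sum>m\<in>UNIV. \<Sum>l\<in>UNIV. (c j * real (N j m k)) * (c l * real (N l i m)))"
    by (rule sum.swap)
  also have "\<dots> = (\<Sum>j\<in>UNIV. \<Sum>l\<in>UNIV. \<Sum>m\<in>UNIV. (c j * real (N j m k)) * (c l * real (N l i m)))"
    by (rule sum.cong[OF refl], rule sum.swap)
  also have "\<dots> = (\<Sum>j\<in>UNIV. \<Sum>l\<in>UNIV. c j * c l * real (\<Sum>m\<in>UNIV. N l i m * N j m k))"
    by (intro sum.cong refl) (simp add: sum_distrib_left mult_ac)
  also have "\<dots> = (\<Sum>j\<in>UNIV. \<Sum>l\<in>UNIV. c j * c l * real (\<Sum>m\<in>UNIV. N j l m * N m i k))"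
    by (simp only: assoc)
  also have "\<dots> = (\<Sum>j\<in>UNIV. \<Sum>l\<in>UNIV. \<Sum>m\<in>UNIV. c j * c l * real (N j l m) * real (N m i k))"
    by (intro sum.cong refl) (simp add: sum_distrib_left mult_ac)
  also have "\<dots> = (\<Sum>j\<in>UNIV. \<Sum>m\<in>UNIV. \<Sum>l\<in>UNIV. c j * c l * real (N j l m) * real (N m i k))"
    by (rule sum.cong[OF refl], rule sum.swap)
  also have "\<dots> = (\<Sum>j\<in>UNIV. \<Sum>m\<in>UNIV. c j * (\<Sum>l\<in>UNIV. real (N j l m) * c l) * real (N m i k))"
    by (intro sum.cong refl) (simp add: sum_distrib_left sum_distrib_right mult_ac)
  also have "\<dots> = (\<Sum>j\<in>UNIV. \<Sum>m\<in>UNIV. c j * (c j * c m) * real (N m i k))"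
    by (simp only: c_eig2)
  also have "\<dots> = (\<Sum>j\<in>UNIV. c j * c j * a k i)"
    by (rule sum.cong[OF refl]) (simp add: a_def sum_distrib_left mult_ac)
  also have "\<dots> = (\<Sum>j\<in>UNIV. c j * c j) * a k i"
    by (simp add: sum_distrib_right)
  finally show ?thesis .
qed


lemma main_psd: "psd (\<Sum>j\<in>UNIV. mat_opnorm (fusion_mat N j) *\<^sub>R fusion_mat N j)"
proof -
  define M where "M = (\<Sum>j\<in>UNIV. mat_opnorm (fusion_mat N j) *\<^sub>R fusion_mat N j)"
  define D where "D = (\<Sum>j\<in>UNIV. c j * c j)"
  have "c e * c e \<le> D" unfolding D_def by (rule member_le_sum) auto
  then have Dpos: "D > 0" by (simp add: c_e)
  have Mv: "(M *v v) $ i = (\<Sum>k\<in>UNIV. complex_of_real (a i k) * v $ k)" for v i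
    unfolding matrix_vector_mult_def vec_lambda_beta M_def A_entry ..
  have "let q = (\<Sum>i\<in>UNIV. cnj (v $ i) * (M *v v) $ i) in Im q = 0 \<and> 0 \<le> Re q" for v
  proof -
    define W where "W i = (M *v v) $ i" for i
    define q where "q = (\<Sum>i\<in>UNIV. cnj (v $ i) * W i)"
    have AW: "(\<Sum>i\<in>UNIV. complex_of_real (a k i) * W i) = complex_of_real D * W k" for k
    proof -
      have "(\<Sum>i\<in>UNIV. complex_of_real (a k i) * W i)
          = (\<Sum>i\<in>UNIV. \<Sum>m\<in>UNIV. complex_of_real (a k i) * (complex_of_real (a i m) * v $ m))"
        unfolding W_def Mv sum_distrib_left ..
      also have "\<dots> = (\<Sum>m\<in>UNIV. \<Sum>i\<in>UNIV. complex_of_real (a k i) * (complex_of_real (a i m) * v $ m))"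
        by (rule sum.swap)
      also have "\<dots> = (\<Sum>m\<in>UNIV. complex_of_real (\<Sum>i\<in>UNIV. a k i * a i m) * v $ m)"
        by (rule sum.cong[OF refl]) (simp add: sum_distrib_left sum_distrib_right mult_ac)
      also have "\<dots> = (\<Sum>m\<in>UNIV. complex_of_real D * (complex_of_real (a k m) * v $ m))"
        by (rule sum.cong[OF refl]) (simp only: a_sq D_def[symmetric], simp add: mult_ac)
      also have "\<dots> = complex_of_real D * W k"
        unfolding W_def Mv sum_distrib_left ..
      finally show ?thesis .
    qed
    have key: "complex_of_real (\<Sum>i\<in>UNIV. (cmod (W i))\<^sup>2) = complex_of_real D * q"
    proof -
      have "complex_of_real (\<Sum>i\<in>UNIV. (cmod (W i))\<^sup>2) = (\<Sum>i\<in>UNIV. cnj (W i) * W i)"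
        unfolding of_real_sum complex_norm_square by (simp add: mult.commute)
      also have "\<dots> = (\<Sum>i\<in>UNIV. \<Sum>k\<in>UNIV. complex_of_real (a i k) * cnj (v $ k) * W i)"
        unfolding sum_distrib_right by (rule sum.cong[OF refl]) (simp add: W_def Mv cnj_sum sum_distrib_right)
      also have "\<dots> = (\<Sum>k\<in>UNIV. \<Sum>i\<in>UNIV. complex_of_real (a i k) * cnj (v $ k) * W i)"
        by (rule sum.swap)
      also have "\<dots> = (\<Sum>k\<in>UNIV. cnj (v $ k) * (\<Sum>i\<in>UNIV. complex_of_real (a k i) * W i))"
        by (rule sum.cong[OF refl], subst a_sym, simp add: sum_distrib_left mult_ac)
      also have "\<dots> = complex_of_real D * q"
        unfolding AW q_def sum_distrib_left by (simp add: mult_ac)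
      finally show ?thesis .
    qed
    define S where "S = (\<Sum>i\<in>UNIV. (cmod (W i))\<^sup>2)"
    have S0: "S \<ge> 0" unfolding S_def by (intro sum_nonneg) simp
    have "q = complex_of_real (S / D)"
      using key Dpos by (simp add: S_def field_simps)
    then have "Im q = 0 \<and> 0 \<le> Re q" using S0 Dpos by simp
    then show ?thesis unfolding Let_def q_def W_def .
  qed
  then show ?thesis unfolding psd_def M_def by blast
qed

end

theorem mainTheorem15:
  fixes N :: "'n::finite \<Rightarrow> 'n \<Rightarrow> 'n \<Rightarrow> nat" and e :: 'n and dual :: "'n \<Rightarrow> 'n"
  assumes "fusion_ring N e dual"
  shows "psd (\<Sum>j\<in>UNIV. mat_opnorm (fusion_mat N j) *\<^sub>R fusion_mat N j)"
proof -
  interpret fr N e dual by standard (rule assms)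
  show ?thesis by (rule main_psd)
qed

end
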